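(* Let $k$ be an algebraically closed field of characteristic zero, let $\mathfrak g$ be a finite-dimensional nilpotent Lie algebra over $k$, and let $(A,\cdot)$ be an LR-structure on $\mathfrak g$. Let $\mathfrak a\subseteq\mathfrak{gl}(A)$ be the (abelian) Lie subalgebra spanned by all $L(x)$, $x\in A$, and let $A=A_1\oplus\cdots\oplus A_s$ be the decomposition of $A$ into the (nonzero) generalized weight spaces $A_i=A_{\alpha_i}(\mathfrak a)$ of the inclusion representation of $\mathfrak a$, with pairwise distinct weights $\alpha_i\in\mathrm{Hom}(\mathfrak a,k)$. For each $i$ let $e_{i,1},\dots,e_{i,n_i}$ be a basis of $A_i$ in which every $L(z)|_{A_i}$, $z\in A$, is upper triangular (with all diagonal entries equal to $\alpha_i(L(z))$), and put $A_{i,n_i-1}=\mathrm{span}(e_{i,1},\dots,e_{i,n_i-1})$. Write $x\in A$ as $x=x_1+\dots+x_s$ with $x_j\in A_j$. If $x_i\in A_{i,n_i-1}$ for some $i$, then $\alpha_i(L(x))=0$.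
   Context: An LR-algebra is a vector space $A$ with a bilinear product $\cdot$ satisfying $x\cdot(y\cdot z)=y\cdot(x\cdot z)$ and $(x\cdot y)\cdot z=(x\cdot z)\cdot y$ for all $x,y,z\in A$. An LR-structure on a Lie algebra $\mathfrak g$ is an LR-algebra product on the underlying vector space of $\mathfrak g$ such that $x\cdot y-y\cdot x=[x,y]$. $L(x)y=x\cdot y$, $R(x)y=y\cdot x$; the operators $L(x)$ pairwise commute in an LR-algebra. *)

theory Defs
  imports "HOL-Analysis.Analysis" "HOL-Library.Function_Algebras"
    "HOL-Computational_Algebra.Polynomial"
begin

text \<open>The finite-dimensional vector space A over k is modelled as k^n (type 'k^'n);
  a product on A is a function prod :: 'k^'n => 'k^'n => 'k^'n.\<close>

definition bilinear_prod :: "('k::field^'n \<Rightarrow> 'k^'n \<Rightarrow> 'k^'n) \<Rightarrow> bool" where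
  "bilinear_prod p \<longleftrightarrow>
     (\<forall>x. Vector_Spaces.linear (*s) (*s) (p x)) \<and>
     (\<forall>y. Vector_Spaces.linear (*s) (*s) (\<lambda>x. p x y))"

definition LR_algebra :: "('k::field^'n \<Rightarrow> 'k^'n \<Rightarrow> 'k^'n) \<Rightarrow> bool" where
  "LR_algebra p \<longleftrightarrow> bilinear_prod p \<and>
     (\<forall>x y z. p x (p y z) = p y (p x z)) \<and>
     (\<forall>x y z. p (p x y) z = p (p x z) y)"

text \<open>The Lie algebra g underlying an LR-structure p: bracket [x,y] = x.y - y.x.\<close>
definition lie_br :: "('k::field^'n \<Rightarrow> 'k^'n \<Rightarrow> 'k^'n) \<Rightarrow> 'k^'n \<Rightarrow> 'k^'n \<Rightarrow> 'k^'n" where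
  "lie_br p x y = p x y - p y x"

text \<open>Lower central series g^1 = g, g^(m+1) = [g, g^m]; nilpotent iff some term is 0.\<close>
fun lower_central :: "('k::field^'n \<Rightarrow> 'k^'n \<Rightarrow> 'k^'n) \<Rightarrow> nat \<Rightarrow> ('k^'n) set" where
  "lower_central p 0 = UNIV"
| "lower_central p (Suc m) = vec.span {lie_br p x y | x y. y \<in> lower_central p m}"

definition nilpotent_lie :: "('k::field^'n \<Rightarrow> 'k^'n \<Rightarrow> 'k^'n) \<Rightarrow> bool" where
  "nilpotent_lie p \<longleftrightarrow> (\<exists>m. lower_central p m = {0})"

text \<open>Left multiplication operator L(x).\<close>
definition Lop :: "('k::field^'n \<Rightarrow> 'k^'n \<Rightarrow> 'k^'n) \<Rightarrow> 'k^'n \<Rightarrow> ('k^'n \<Rightarrow> 'k^'n)" where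
  "Lop p x = (\<lambda>y. p x y)"

text \<open>Scalar multiplication on endomorphisms gl(A).\<close>
definition fscale :: "'k::field \<Rightarrow> ('k^'n \<Rightarrow> 'k^'n) \<Rightarrow> ('k^'n \<Rightarrow> 'k^'n)" where
  "fscale c f = (\<lambda>v. c *s f v)"

text \<open>The subalgebra a of gl(A) spanned by all L(x).\<close>
definition Lspan :: "('k::field^'n \<Rightarrow> 'k^'n \<Rightarrow> 'k^'n) \<Rightarrow> ('k^'n \<Rightarrow> 'k^'n) set" where
  "Lspan p = module.span fscale (range (Lop p))"

text \<open>alpha : a -> k linear (values outside a are irrelevant).\<close>
definition lin_functional_on :: "('k::field^'n \<Rightarrow> 'k^'n) set \<Rightarrow> (('k^'n \<Rightarrow> 'k^'n) \<Rightarrow> 'k) \<Rightarrow> bool" where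
  "lin_functional_on S \<alpha> \<longleftrightarrow>
     (\<forall>f\<in>S. \<forall>g\<in>S. \<alpha> (f + g) = \<alpha> f + \<alpha> g) \<and>
     (\<forall>c. \<forall>f\<in>S. \<alpha> (fscale c f) = c * \<alpha> f)"

text \<open>Generalized weight space A_alpha(a) of the inclusion representation of a on A.\<close>
definition gen_weight_space :: "('k::field^'n \<Rightarrow> 'k^'n \<Rightarrow> 'k^'n) \<Rightarrow> (('k^'n \<Rightarrow> 'k^'n) \<Rightarrow> 'k) \<Rightarrow> ('k^'n) set" where
  "gen_weight_space p \<alpha> =
     {v. \<forall>a\<in>Lspan p. \<exists>N. ((\<lambda>w. a w - \<alpha> a *s w) ^^ N) v = 0}"

text \<open>A weight: a linear functional on a with nonzero generalized weight space.\<close>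
definition is_weight :: "('k::field^'n \<Rightarrow> 'k^'n \<Rightarrow> 'k^'n) \<Rightarrow> (('k^'n \<Rightarrow> 'k^'n) \<Rightarrow> 'k) \<Rightarrow> bool" where
  "is_weight p \<alpha> \<longleftrightarrow> lin_functional_on (Lspan p) \<alpha> \<and> gen_weight_space p \<alpha> \<noteq> {0}"

end

theory Submission
  imports Defs
begin


definition lin :: "('k::field^'n \<Rightarrow> 'k^'n) \<Rightarrow> bool" where
  "lin f \<longleftrightarrow> (\<forall>x y. f (x + y) = f x + f y) \<and> (\<forall>c x. f (c *s x) = c *s f x)"

lemma lin_linear: "lin f \<longleftrightarrow> Vector_Spaces.linear (*s) (*s) f"
  unfolding lin_def Vector_Spaces.linear_iff using vec.vector_space_axioms by auto

lemma lin_add: "lin f \<Longrightarrow> f (x + y) = f x + f y" by (simp add: lin_def)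
lemma lin_scale: "lin f \<Longrightarrow> f (c *s x) = c *s f x" by (simp add: lin_def)
lemma lin_0: "lin f \<Longrightarrow> f 0 = 0"
  using lin_scale[of f 0 0] by simp
lemma lin_neg: "lin f \<Longrightarrow> f (- x) = - f x"
  using lin_scale[of f "-1" x] by (simp add: vec.scale_minus_left)
lemma lin_diff: "lin f \<Longrightarrow> f (x - y) = f x - f y"
  using lin_add[of f x "-y"] lin_neg[of f y] by simp
lemma lin_sum: "lin f \<Longrightarrow> f (sum g A) = (\<Sum>a\<in>A. f (g a))"
  by (induction A rule: infinite_finite_induct) (auto simp: lin_0 lin_add)

lemma lin_funpow: "lin f \<Longrightarrow> lin (f ^^ n)"
  by (induction n) (auto simp: lin_def)

lemma lin_shift: "lin f \<Longrightarrow> lin (\<lambda>w. f w - c *s w)"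
  unfolding lin_def by (auto simp: vec.scale_right_distrib vec.scale_left_commute)

lemma lin_span: "lin f \<Longrightarrow> (\<forall>s\<in>S. f s \<in> vec.span T) \<Longrightarrow> y \<in> vec.span S \<Longrightarrow> f y \<in> vec.span T"
  apply (erule vec.span_induct_alt[where h="\<lambda>y. f y \<in> vec.span T"])
   apply (auto simp: lin_0 lin_add lin_scale intro!: vec.span_add vec.span_scale vec.span_zero)
  done

lemma funpow_zero_mono: assumes "lin f" "(f^^N) v = 0" "N \<le> M" shows "(f^^M) v = 0"
proof -
  have "(f^^M) v = (f^^((M-N)+N)) v" using assms(3) by simp
  also have "\<dots> = (f^^(M-N)) ((f^^N) v)" by (simp only: funpow_add comp_apply)
  also have "\<dots> = 0" using assms(2) lin_0[OF lin_funpow[OF assms(1)]] by simp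
  finally show ?thesis .
qed

lemma funpow_commute: "(\<And>y. f (g y) = g (f y)) \<Longrightarrow> (f ^^ n) (g y) = g ((f ^^ n) y)"
  by (induction n) auto

lemma module_fscale: "module (fscale :: 'k::field \<Rightarrow> ('k^'n \<Rightarrow> 'k^'n) \<Rightarrow> _)"
  by unfold_locales
     (auto simp: fscale_def plus_fun_def fun_eq_iff vec.scale_right_distrib vec.scale_left_distrib)

lemma Lspan_induct:
  assumes "a \<in> Lspan p" "P 0" "\<And>z. P (Lop p z)" "\<And>f g. P f \<Longrightarrow> P g \<Longrightarrow> P (f + g)"
    "\<And>c f. P f \<Longrightarrow> P (fscale c f)"
  shows "P a"
  apply (rule module.span_induct_alt[OF module_fscale, of a "range (Lop p)" P])
  using assms unfolding Lspan_def by auto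

lemma Lop_in_Lspan: "Lop p z \<in> Lspan p"
  unfolding Lspan_def by (rule module.span_base[OF module_fscale]) auto



theorem lemma2p2:
  fixes p :: "'k::{alg_closed_field, field_char_0}^'n \<Rightarrow> 'k^'n \<Rightarrow> 'k^'n"
    and W :: "(('k^'n \<Rightarrow> 'k^'n) \<Rightarrow> 'k) set"
    and \<alpha> :: "('k^'n \<Rightarrow> 'k^'n) \<Rightarrow> 'k"
    and e :: "nat \<Rightarrow> 'k^'n" and m :: nat
    and x :: "'k^'n" and xc :: "(('k^'n \<Rightarrow> 'k^'n) \<Rightarrow> 'k) \<Rightarrow> 'k^'n"
  assumes LR: "LR_algebra p"
    and nilp: "nilpotent_lie p"
    and W_fin: "finite W"
    and W_wt: "\<forall>\<beta>\<in>W. is_weight p \<beta>"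
    and W_dist: "\<forall>\<beta>\<in>W. \<forall>\<gamma>\<in>W. \<beta> \<noteq> \<gamma> \<longrightarrow> (\<exists>a\<in>Lspan p. \<beta> a \<noteq> \<gamma> a)"
    and W_dec: "\<forall>v. \<exists>c. v = (\<Sum>\<beta>\<in>W. c \<beta>) \<and> (\<forall>\<beta>\<in>W. c \<beta> \<in> gen_weight_space p \<beta>)"
    and \<alpha>W: "\<alpha> \<in> W"
    and e_ind: "vec.independent (e ` {..<m})" and e_inj: "inj_on e {..<m}"
    and e_span: "vec.span (e ` {..<m}) = gen_weight_space p \<alpha>"
    and e_tri: "\<forall>z. \<forall>j<m. Lop p z (e j) \<in> vec.span (e ` {..j})"
    and x_dec: "x = (\<Sum>\<beta>\<in>W. xc \<beta>)"
    and xc_in: "\<forall>\<beta>\<in>W. xc \<beta> \<in> gen_weight_space p \<beta>"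
    and x_i: "xc \<alpha> \<in> vec.span (e ` {..<m - 1})"
  shows "\<alpha> (Lop p x) = 0"
proof -
  have bil: "bilinear_prod p" and lcomm: "\<And>x y z. p x (p y z) = p y (p x z)"
    using LR unfolding LR_algebra_def by auto
  have linL: "\<And>z. lin (p z)" using bil unfolding bilinear_prod_def lin_linear by auto
  have linR: "\<And>y. lin (\<lambda>x. p x y)" using bil unfolding bilinear_prod_def lin_linear by auto
  define U where "U = vec.span (e ` {..<m-1})"
  define E where "E = vec.span (e ` {..<m})"
  define ee where "ee = e (m-1)"
  define gw where "gw = gen_weight_space p"
  have m1: "m \<ge> 1"
  proof (rule ccontr)
    assume "\<not> m \<ge> 1" then have "m = 0" by simp
    then have "gen_weight_space p \<alpha> = {0}" using e_span by simp
    with W_wt \<alpha>W show False unfolding is_weight_def by auto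
  qed
  have Eins: "E = vec.span (insert ee (e ` {..<m-1}))"
  proof -
    have "{..<m} = insert (m-1) {..<m-1}" using m1 by auto
    then show ?thesis unfolding E_def ee_def by simp
  qed
  have eeU: "ee \<notin> U"
  proof
    assume "ee \<in> U"
    have s1: "{..<m} - {m-1} = {..<m-1}" using m1 by auto
    have "e ` ({..<m} - {m-1}) = e ` {..<m} - e ` {m-1}"
      by (rule inj_on_image_set_diff[OF e_inj]) (use m1 in auto)
    then have "e ` {..<m} - {ee} = e ` {..<m-1}" using s1 unfolding ee_def by simp
    then have "vec.dependent (e ` {..<m})" unfolding vec.dependent_def
      using \<open>ee \<in> U\<close> m1 unfolding ee_def U_def by (intro bexI[of _ ee]) (auto simp: ee_def)
    with e_ind show False by simp
  qed
  have eeE: "ee \<in> E" unfolding Eins by (rule vec.span_base) simp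
  have UE: "U \<subseteq> E" unfolding U_def E_def by (rule vec.span_mono) auto
  have LU: "p z u \<in> U" if "u \<in> U" for z u
    unfolding U_def
  proof (rule lin_span[OF linL _ that[unfolded U_def]])
    show "\<forall>s\<in>e ` {..<m - 1}. p z s \<in> vec.span (e ` {..<m - 1})"
    proof
      fix s assume "s \<in> e ` {..<m-1}" then obtain j where j: "j < m-1" "s = e j" by auto
      have "p z (e j) \<in> vec.span (e ` {..j})" using e_tri j unfolding Lop_def by auto
      also have "\<dots> \<subseteq> vec.span (e ` {..<m-1})" using j by (intro vec.span_mono) auto
      finally show "p z s \<in> vec.span (e ` {..<m - 1})" using j by simp
    qed
  qed
  have LE: "p z u \<in> E" if "u \<in> E" for z u
    unfolding E_def
  proof (rule lin_span[OF linL _ that[unfolded E_def]])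
    show "\<forall>s\<in>e ` {..<m}. p z s \<in> vec.span (e ` {..<m})"
    proof
      fix s assume "s \<in> e ` {..<m}" then obtain j where j: "j < m" "s = e j" by auto
      have "p z (e j) \<in> vec.span (e ` {..j})" using e_tri j unfolding Lop_def by auto
      also have "\<dots> \<subseteq> vec.span (e ` {..<m})" using j by (intro vec.span_mono) auto
      finally show "p z s \<in> vec.span (e ` {..<m})" using j by simp
    qed
  qed
  have gwE: "gw \<alpha> = E" using e_span unfolding gw_def E_def by simp
  have Q: "lin a \<and> (\<forall>u\<in>U. a u \<in> U) \<and> (\<forall>u\<in>E. a u \<in> E) \<and> (\<forall>z y. a (p z y) = p z (a y))"
    if "a \<in> Lspan p" for a
    using that
  proof (rule Lspan_induct)
    show "lin 0 \<and> (\<forall>u\<in>U. (0::'k^'n\<Rightarrow>'k^'n) u \<in> U) \<and> (\<forall>u\<in>E. (0::'k^'n\<Rightarrow>'k^'n) u \<in> E)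
        \<and> (\<forall>z y. (0::'k^'n\<Rightarrow>'k^'n) (p z y) = p z (0 y))"
      by (auto simp: lin_def U_def E_def lin_0[OF linL] vec.span_zero)
  next
    fix z show "lin (Lop p z) \<and> (\<forall>u\<in>U. Lop p z u \<in> U) \<and> (\<forall>u\<in>E. Lop p z u \<in> E)
        \<and> (\<forall>za y. Lop p z (p za y) = p za (Lop p z y))"
      using linL LU LE lcomm unfolding Lop_def by auto
  next
    fix f g assume f: "lin f \<and> (\<forall>u\<in>U. f u \<in> U) \<and> (\<forall>u\<in>E. f u \<in> E) \<and> (\<forall>z y. f (p z y) = p z (f y))"
      and g: "lin g \<and> (\<forall>u\<in>U. g u \<in> U) \<and> (\<forall>u\<in>E. g u \<in> E) \<and> (\<forall>z y. g (p z y) = p z (g y))"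
    show "lin (f + g) \<and> (\<forall>u\<in>U. (f + g) u \<in> U) \<and> (\<forall>u\<in>E. (f + g) u \<in> E) \<and> (\<forall>z y. (f + g) (p z y) = p z ((f + g) y))"
      using f g by (auto simp: lin_def plus_fun_apply U_def E_def lin_add[OF linL]
          vec.scale_right_distrib intro!: vec.span_add)
  next
    fix c f assume f: "lin f \<and> (\<forall>u\<in>U. f u \<in> U) \<and> (\<forall>u\<in>E. f u \<in> E) \<and> (\<forall>z y. f (p z y) = p z (f y))"
    show "lin (fscale c f) \<and> (\<forall>u\<in>U. fscale c f u \<in> U) \<and> (\<forall>u\<in>E. fscale c f u \<in> E) \<and> (\<forall>z y. fscale c f (p z y) = p z (fscale c f y))"
      using f by (auto simp: lin_def fscale_def U_def E_def lin_scale[OF linL]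
          vec.scale_right_distrib vec.scale_left_commute intro!: vec.span_scale)
  qed
  have comm: "a (b y) = b (a y)" if a: "a \<in> Lspan p" and b: "b \<in> Lspan p" for a b y
  proof -
    have Qa: "lin a" "\<forall>z y. a (p z y) = p z (a y)" using Q[OF a] by auto
    have "\<forall>y. a (b y) = b (a y)" using b
    proof (rule Lspan_induct)
      show "\<forall>y. a ((0::'k^'n\<Rightarrow>'k^'n) y) = 0 (a y)" using lin_0[OF Qa(1)] by simp
    next
      fix z show "\<forall>y. a (Lop p z y) = Lop p z (a y)" using Qa(2) unfolding Lop_def by simp
    next
      fix f g assume "\<forall>y. a (f y) = f (a y)" "\<forall>y. a (g y) = g (a y)"
      then show "\<forall>y. a ((f + g) y) = (f + g) (a y)" using lin_add[OF Qa(1)] by (simp add: plus_fun_apply)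
    next
      fix c f assume "\<forall>y. a (f y) = f (a y)"
      then show "\<forall>y. a (fscale c f y) = fscale c f (a y)" using lin_scale[OF Qa(1)] by (simp add: fscale_def)
    qed
    then show ?thesis by simp
  qed
  have linT: "lin (\<lambda>w. a w - c *s w)" if "a \<in> Lspan p" for a c
    using Q[OF that] lin_shift by blast
  have pow0: "((\<lambda>w. b w - c *s w)^^M) v = 0"
    if "b \<in> Lspan p" "((\<lambda>w. b w - c *s w)^^N) v = 0" "N \<le> M" for b c N M v
    using funpow_zero_mono[OF linT[OF that(1)]] that(2,3) by blast
  have gw_mem: "v \<in> gw \<beta> \<longleftrightarrow> (\<forall>b\<in>Lspan p. \<exists>N. ((\<lambda>w. b w - \<beta> b *s w)^^N) v = 0)" for v \<beta>
    unfolding gw_def gen_weight_space_def by simp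
  have gw_add: "v + v' \<in> gw \<beta>" if vv: "v \<in> gw \<beta>" "v' \<in> gw \<beta>" for v v' \<beta>
    unfolding gw_mem
  proof
    fix b assume b: "b \<in> Lspan p"
    obtain N N' where "((\<lambda>w. b w - \<beta> b *s w)^^N) v = 0" "((\<lambda>w. b w - \<beta> b *s w)^^N') v' = 0"
      using vv b unfolding gw_mem by blast
    then have "((\<lambda>w. b w - \<beta> b *s w)^^(N+N')) v = 0" "((\<lambda>w. b w - \<beta> b *s w)^^(N+N')) v' = 0"
      using pow0[OF b] by auto
    then show "\<exists>N. ((\<lambda>w. b w - \<beta> b *s w)^^N) (v + v') = 0"
      using lin_add[OF lin_funpow[OF linT[OF b]]] by (intro exI[of _ "N+N'"]) simp
  qed
  have gw_pres: "S v \<in> gw \<beta>" if S: "lin S" "\<forall>b\<in>Lspan p. \<forall>y. S (b y) = b (S y)" and v: "v \<in> gw \<beta>"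
    for S v \<beta>
    unfolding gw_mem
  proof
    fix b assume b: "b \<in> Lspan p"
    obtain N where N: "((\<lambda>w. b w - \<beta> b *s w)^^N) v = 0" using v b unfolding gw_mem by blast
    have "((\<lambda>w. b w - \<beta> b *s w)^^N) (S v) = S (((\<lambda>w. b w - \<beta> b *s w)^^N) v)"
      by (rule funpow_commute) (use S b in \<open>simp add: lin_diff lin_scale\<close>)
    then show "\<exists>N. ((\<lambda>w. b w - \<beta> b *s w)^^N) (S v) = 0" using N lin_0[OF S(1)] by auto
  qed
  have gw_scale: "c *s v \<in> gw \<beta>" if "v \<in> gw \<beta>" for c v \<beta>
  proof (rule gw_pres[OF _ _ that])
    show "lin (\<lambda>v. c *s v)" by (auto simp: lin_def vec.scale_right_distrib vec.scale_left_commute)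
    show "\<forall>b\<in>Lspan p. \<forall>y. c *s b y = b (c *s y)"
      using Q by (auto simp: lin_scale)
  qed
  have gw_zero: "0 \<in> gw \<beta>" for \<beta>
    unfolding gw_mem by (auto intro: exI[of _ 0])
  have sc: "d = 0" if "d *s ee \<in> U" for d
  proof (rule ccontr)
    assume d: "d \<noteq> 0"
    have "inverse d *s (d *s ee) \<in> U" using that unfolding U_def by (rule vec.span_scale)
    then have "ee \<in> U" using d by (simp add: vec.scale_scale)
    with eeU show False by simp
  qed
  have diag: "\<exists>u\<in>U. (T^^k) ee = d^k *s ee + u"
    if T: "lin T" "\<forall>u\<in>U. T u \<in> U" and u0: "u0 \<in> U" "T ee = d *s ee + u0" for T d u0 k
  proof (induction k)
    case 0 show ?case by (intro bexI[of _ 0]) (auto simp: U_def vec.span_zero)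
  next
    case (Suc k)
    then obtain u where u: "u \<in> U" "(T^^k) ee = d^k *s ee + u" by blast
    have "(T^^Suc k) ee = T (d^k *s ee + u)" using u by simp
    also have "\<dots> = d^(Suc k) *s ee + (d^k *s u0 + T u)"
      using T u0 by (simp add: lin_add lin_scale vec.scale_right_distrib vec.scale_scale algebra_simps)
    finally show ?case using T u u0 unfolding U_def
      by (intro bexI[of _ "d^k *s u0 + T u"]) (auto intro!: vec.span_add vec.span_scale)
  qed
  have TU: "\<forall>u\<in>U. ((\<lambda>w. a w - c *s w)^^k) u \<in> U" if a: "a \<in> Lspan p" for a c k
  proof (induction k)
    case 0 show ?case by simp
  next
    case (Suc k)
    show ?case
    proof
      fix u assume u: "u \<in> U"
      have "((\<lambda>w. a w - c *s w)^^k) u \<in> U" using Suc u by blast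
      then show "((\<lambda>w. a w - c *s w)^^Suc k) u \<in> U"
        using Q[OF a] unfolding U_def by (auto intro!: vec.span_diff vec.span_scale)
    qed
  qed
  have coef: "\<exists>u\<in>U. a ee = \<alpha> a *s ee + u" if a: "a \<in> Lspan p" for a
  proof -
    have "a ee \<in> E" using Q[OF a] eeE by blast
    then obtain k where k: "a ee - k *s ee \<in> U" unfolding Eins U_def vec.span_breakdown_eq by blast
    define T where "T = (\<lambda>w. a w - \<alpha> a *s w)"
    have linT': "lin T" unfolding T_def by (rule linT[OF a])
    have TU1: "\<forall>u\<in>U. T u \<in> U" using TU[OF a, where c="\<alpha> a" and k=1] unfolding T_def by simp
    have Tee: "T ee = (k - \<alpha> a) *s ee + (a ee - k *s ee)"
      unfolding T_def by (simp add: vec.scale_left_diff_distrib)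
    have "ee \<in> gw \<alpha>" using gwE eeE by simp
    then obtain N where N: "(T^^N) ee = 0" using a unfolding gw_mem T_def by blast
    obtain u where u: "u \<in> U" "(T^^N) ee = (k - \<alpha> a)^N *s ee + u"
      using diag[OF linT' TU1 k Tee] by blast
    have "(k - \<alpha> a)^N *s ee = - u" using N u(2) by (simp add: eq_neg_iff_add_eq_0)
    also have "\<dots> \<in> U" using u(1) unfolding U_def by (rule vec.span_neg)
    finally have "(k - \<alpha> a)^N = 0" by (rule sc)
    then have "k = \<alpha> a" by simp
    then show ?thesis using k by (intro bexI[of _ "a ee - k *s ee"]) auto
  qed
  have key: "\<forall>d u w. d \<noteq> 0 \<longrightarrow> u \<in> U \<longrightarrow> (\<forall>\<beta>\<in>F. w \<beta> \<in> gw \<beta>) \<longrightarrow> d *s ee + u \<noteq> (\<Sum>\<beta>\<in>F. w \<beta>)"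
    if "finite F" "F \<subseteq> W - {\<alpha>}" for F
    using that
  proof (induction F rule: finite_induct)
    case empty
    show ?case
    proof (intro allI impI notI)
      fix d u and w :: "(('k^'n\<Rightarrow>'k^'n)\<Rightarrow>'k) \<Rightarrow> 'k^'n"
      assume d: "d \<noteq> 0" and u: "u \<in> U" and eq: "d *s ee + u = sum w {}"
      then have "d *s ee = - u" by (simp add: eq_neg_iff_add_eq_0)
      also have "\<dots> \<in> U" using u unfolding U_def by (rule vec.span_neg)
      finally show False using sc d by blast
    qed
  next
    case (insert \<gamma> F)
    show ?case
    proof (intro allI impI notI)
      fix d u and w :: "(('k^'n\<Rightarrow>'k^'n)\<Rightarrow>'k) \<Rightarrow> 'k^'n"
      assume d: "d \<noteq> 0" and u: "u \<in> U" and w: "\<forall>\<beta>\<in>insert \<gamma> F. w \<beta> \<in> gw \<beta>"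
        and eq: "d *s ee + u = sum w (insert \<gamma> F)"
      have \<gamma>W: "\<gamma> \<in> W" "\<alpha> \<noteq> \<gamma>" using insert.prems by auto
      obtain a where a: "a \<in> Lspan p" "\<alpha> a \<noteq> \<gamma> a" using W_dist \<alpha>W \<gamma>W by blast
      define T where "T = (\<lambda>w. a w - \<gamma> a *s w)"
      have wg: "w \<gamma> \<in> gw \<gamma>" using w by simp
      obtain N where N: "(T^^N) (w \<gamma>) = 0" using wg a unfolding gw_mem T_def by blast
      define TN where "TN = T^^N"
      have linT1: "lin T" unfolding T_def by (rule linT[OF a(1)])
      have linTN: "lin TN" unfolding TN_def by (rule lin_funpow[OF linT1])
      have TNU: "\<forall>u\<in>U. TN u \<in> U" unfolding TN_def T_def by (rule TU[OF a(1)])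
      obtain ua where ua: "ua \<in> U" "a ee = \<alpha> a *s ee + ua" using coef[OF a(1)] by blast
      have TU1: "\<forall>u\<in>U. T u \<in> U" using TU[OF a(1), where c="\<gamma> a" and k=1] unfolding T_def by simp
      have Tee: "T ee = (\<alpha> a - \<gamma> a) *s ee + ua" unfolding T_def using ua
        by (simp add: vec.scale_left_diff_distrib)
      obtain u1 where u1: "u1 \<in> U" "TN ee = (\<alpha> a - \<gamma> a)^N *s ee + u1"
        using diag[OF linT1 TU1 ua(1) Tee, of N] unfolding TN_def by blast
      have comTN: "\<forall>b\<in>Lspan p. \<forall>y. TN (b y) = b (TN y)"
      proof (intro ballI allI)
        fix b y assume b: "b \<in> Lspan p"
        show "TN (b y) = b (TN y)" unfolding TN_def
        proof (rule funpow_commute)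
          fix y show "T (b y) = b (T y)" unfolding T_def using comm[OF a(1) b] Q[OF b]
            by (simp add: lin_diff lin_scale)
        qed
      qed
      have l: "TN (d *s ee + u) = (d * (\<alpha> a - \<gamma> a)^N) *s ee + (d *s u1 + TN u)"
        using linTN u1(2) by (simp add: lin_add lin_scale vec.scale_right_distrib vec.scale_scale add.assoc)
      have r: "TN (sum w (insert \<gamma> F)) = (\<Sum>\<beta>\<in>F. TN (w \<beta>))"
        using insert.hyps N linTN by (simp add: lin_add lin_sum TN_def)
      have d': "d * (\<alpha> a - \<gamma> a)^N \<noteq> 0" using d a(2) by simp
      have u': "d *s u1 + TN u \<in> U" using u1(1) TNU u unfolding U_def
        by (auto intro!: vec.span_add vec.span_scale)
      have w': "\<forall>\<beta>\<in>F. TN (w \<beta>) \<in> gw \<beta>" using w gw_pres[OF linTN comTN] by auto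
      have IH': "\<forall>d u w. d \<noteq> 0 \<longrightarrow> u \<in> U \<longrightarrow> (\<forall>\<beta>\<in>F. w \<beta> \<in> gw \<beta>) \<longrightarrow> d *s ee + u \<noteq> (\<Sum>\<beta>\<in>F. w \<beta>)"
        using insert.IH insert.prems by auto
      have "(d * (\<alpha> a - \<gamma> a)^N) *s ee + (d *s u1 + TN u) \<noteq> (\<Sum>\<beta>\<in>F. TN (w \<beta>))"
        using IH'[rule_format, of "d * (\<alpha> a - \<gamma> a)^N" "d *s u1 + TN u" "\<lambda>\<beta>. TN (w \<beta>)"] d' u' w' by blast
      moreover have "(d * (\<alpha> a - \<gamma> a)^N) *s ee + (d *s u1 + TN u) = (\<Sum>\<beta>\<in>F. TN (w \<beta>))"
        using l r eq by metis
      ultimately show False by blast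
    qed
  qed
  define V where "V = {v. \<exists>u w. u \<in> U \<and> (\<forall>\<beta>\<in>W-{\<alpha>}. w \<beta> \<in> gw \<beta>) \<and> v = u + (\<Sum>\<beta>\<in>W-{\<alpha>}. w \<beta>)}"
  have V_intro: "v \<in> V" if "u \<in> U" "\<forall>\<beta>\<in>W-{\<alpha>}. w \<beta> \<in> gw \<beta>" "v = u + (\<Sum>\<beta>\<in>W-{\<alpha>}. w \<beta>)" for u w v
    unfolding V_def using that by blast
  have V_add: "v1 + v2 \<in> V" if vv: "v1 \<in> V" "v2 \<in> V" for v1 v2
  proof -
    obtain u1 w1 where 1: "u1 \<in> U" "\<forall>\<beta>\<in>W-{\<alpha>}. w1 \<beta> \<in> gw \<beta>" "v1 = u1 + (\<Sum>\<beta>\<in>W-{\<alpha>}. w1 \<beta>)"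
      using vv(1) unfolding V_def by blast
    obtain u2 w2 where 2: "u2 \<in> U" "\<forall>\<beta>\<in>W-{\<alpha>}. w2 \<beta> \<in> gw \<beta>" "v2 = u2 + (\<Sum>\<beta>\<in>W-{\<alpha>}. w2 \<beta>)"
      using vv(2) unfolding V_def by blast
    have "v1 + v2 = (u1 + u2) + (\<Sum>\<beta>\<in>W-{\<alpha>}. w1 \<beta> + w2 \<beta>)"
      using 1(3) 2(3) by (simp add: sum.distrib algebra_simps)
    moreover have "u1 + u2 \<in> U" using 1(1) 2(1) unfolding U_def by (rule vec.span_add)
    moreover have "\<forall>\<beta>\<in>W-{\<alpha>}. w1 \<beta> + w2 \<beta> \<in> gw \<beta>" using 1(2) 2(2) gw_add by blast
    ultimately show ?thesis by (intro V_intro[where u="u1+u2" and w="\<lambda>\<beta>. w1 \<beta> + w2 \<beta>"]) auto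
  qed
  have V_scale: "c *s v \<in> V" if vv: "v \<in> V" for c v
  proof -
    obtain u1 w1 where 1: "u1 \<in> U" "\<forall>\<beta>\<in>W-{\<alpha>}. w1 \<beta> \<in> gw \<beta>" "v = u1 + (\<Sum>\<beta>\<in>W-{\<alpha>}. w1 \<beta>)"
      using vv(1) unfolding V_def by blast
    have "c *s v = c *s u1 + (\<Sum>\<beta>\<in>W-{\<alpha>}. c *s w1 \<beta>)"
      using 1(3) by (simp add: vec.scale_sum_right vec.scale_right_distrib)
    moreover have "c *s u1 \<in> U" using 1(1) unfolding U_def by (rule vec.span_scale)
    moreover have "\<forall>\<beta>\<in>W-{\<alpha>}. c *s w1 \<beta> \<in> gw \<beta>" using 1(2) gw_scale by blast
    ultimately show ?thesis by (intro V_intro[where u="c *s u1" and w="\<lambda>\<beta>. c *s w1 \<beta>"]) auto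
  qed
  have V_U: "u \<in> V" if "u \<in> U" for u
    unfolding V_def using that gw_zero by (intro CollectI exI[of _ u] exI[of _ "\<lambda>_. 0"]) auto
  have V_diff: "v1 - v2 \<in> V" if "v1 \<in> V" "v2 \<in> V" for v1 v2
  proof -
    have "v1 + (-1) *s v2 \<in> V" using that V_add V_scale by blast
    then show ?thesis by (simp add: vec.scale_minus_left)
  qed
  have RV: "p v x \<in> V" for v
  proof -
    have "p v x = (\<Sum>\<beta>\<in>W. p v (xc \<beta>))" unfolding x_dec by (rule lin_sum[OF linL])
    also have "\<dots> = p v (xc \<alpha>) + (\<Sum>\<beta>\<in>W-{\<alpha>}. p v (xc \<beta>))" by (rule sum.remove[OF W_fin \<alpha>W])
    finally have eq: "p v x = p v (xc \<alpha>) + (\<Sum>\<beta>\<in>W-{\<alpha>}. p v (xc \<beta>))" .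
    have "p v (xc \<alpha>) \<in> U" using LU x_i unfolding U_def by blast
    moreover have "\<forall>\<beta>\<in>W-{\<alpha>}. p v (xc \<beta>) \<in> gw \<beta>"
    proof
      fix \<beta> assume "\<beta> \<in> W-{\<alpha>}"
      then have "xc \<beta> \<in> gw \<beta>" using xc_in unfolding gw_def by simp
      moreover have "\<forall>b\<in>Lspan p. \<forall>y. p v (b y) = b (p v y)" using Q by auto
      ultimately show "p v (xc \<beta>) \<in> gw \<beta>" using gw_pres[OF linL] by blast
    qed
    ultimately show ?thesis using eq by (intro V_intro[where u="p v (xc \<alpha>)" and w="\<lambda>\<beta>. p v (xc \<beta>)"]) auto
  qed
  have LV: "p x v \<in> V" if vv: "v \<in> V" for v
  proof -
    obtain u1 w1 where 1: "u1 \<in> U" "\<forall>\<beta>\<in>W-{\<alpha>}. w1 \<beta> \<in> gw \<beta>" "v = u1 + (\<Sum>\<beta>\<in>W-{\<alpha>}. w1 \<beta>)"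
      using vv(1) unfolding V_def by blast
    have "p x v = p x u1 + (\<Sum>\<beta>\<in>W-{\<alpha>}. p x (w1 \<beta>))"
      using 1(3) by (simp add: lin_add[OF linL] lin_sum[OF linL])
    moreover have "p x u1 \<in> U" using 1(1) LU by blast
    moreover have "\<forall>\<beta>\<in>W-{\<alpha>}. p x (w1 \<beta>) \<in> gw \<beta>"
    proof
      fix \<beta> assume "\<beta> \<in> W-{\<alpha>}"
      then have "w1 \<beta> \<in> gw \<beta>" using 1(2) by simp
      moreover have "\<forall>b\<in>Lspan p. \<forall>y. p x (b y) = b (p x y)" using Q by auto
      ultimately show "p x (w1 \<beta>) \<in> gw \<beta>" using gw_pres[OF linL] by blast
    qed
    ultimately show ?thesis by (intro V_intro[where u="p x u1" and w="\<lambda>\<beta>. p x (w1 \<beta>)"]) auto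
  qed
  define ad where "ad = (\<lambda>v. p x v - p v x)"
  have r1: "p (a + b) x = p a x + p b x" for a b using lin_add[OF linR[of x]] by simp
  have r2: "p (c *s a) x = c *s p a x" for c a using lin_scale[OF linR[of x]] by simp
  have linad: "lin ad" unfolding ad_def lin_def
    by (simp add: r1 r2 lin_add[OF linL] lin_scale[OF linL] vec.scale_right_diff_distrib)
  have adV: "ad v \<in> V" if "v \<in> V" for v
    unfolding ad_def using V_diff LV RV that by blast
  define c where "c = \<alpha> (Lop p x)"
  obtain u0 where u0: "u0 \<in> U" "Lop p x ee = c *s ee + u0"
    using coef[OF Lop_in_Lspan] unfolding c_def by blast
  have adee: "ad ee = c *s ee + (u0 - p ee x)"
    using u0(2) unfolding ad_def by (simp add: Lop_def)
  have v0: "u0 - p ee x \<in> V" using V_diff V_U[OF u0(1)] RV by blast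
  have iter: "\<exists>v\<in>V. (ad^^k) ee = c^k *s ee + v" for k
  proof (induction k)
    case 0 show ?case using V_U[of 0] unfolding U_def by (auto intro: bexI[of _ 0] vec.span_zero)
  next
    case (Suc k)
    then obtain v where v: "v \<in> V" "(ad^^k) ee = c^k *s ee + v" by blast
    have "(ad^^Suc k) ee = ad (c^k *s ee + v)" using v by simp
    also have "\<dots> = c^k *s ad ee + ad v" using linad by (simp add: lin_add lin_scale)
    also have "\<dots> = c^k *s (c *s ee + (u0 - p ee x)) + ad v" by (simp only: adee)
    also have "\<dots> = c^(Suc k) *s ee + (c^k *s (u0 - p ee x) + ad v)"
      by (simp add: vec.scale_right_distrib vec.scale_scale add.assoc mult.commute)
    finally show ?case using V_add V_scale adV v(1) v0 by blast
  qed
  have lc: "(ad^^k) y \<in> lower_central p k" for k y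
  proof (induction k)
    case 0 show ?case by simp
  next
    case (Suc k)
    have "(ad^^Suc k) y = lie_br p x ((ad^^k) y)" by (simp add: ad_def lie_br_def)
    also have "\<dots> \<in> vec.span {lie_br p x y | x y. y \<in> lower_central p k}"
      using Suc by (intro vec.span_base) blast
    finally show ?case by simp
  qed
  obtain M where M: "lower_central p M = {0}" using nilp unfolding nilpotent_lie_def by blast
  have adM: "(ad^^M) ee = 0" using lc[of M ee] M by simp
  obtain v where v: "v \<in> V" "(ad^^M) ee = c^M *s ee + v" using iter by blast
  obtain u w where uw: "u \<in> U" "\<forall>\<beta>\<in>W-{\<alpha>}. w \<beta> \<in> gw \<beta>" "v = u + (\<Sum>\<beta>\<in>W-{\<alpha>}. w \<beta>)"
    using v(1) unfolding V_def by blast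
  have c0: "c = 0"
  proof (rule ccontr)
    assume "c \<noteq> 0"
    then have cM: "c^M \<noteq> 0" by simp
    have w': "\<forall>\<beta>\<in>W-{\<alpha>}. (-1) *s w \<beta> \<in> gw \<beta>" using uw(2) gw_scale by blast
    have h: "c^M *s ee + u + sum w (W-{\<alpha>}) = 0" using adM v(2) uw(3) by (simp add: add.assoc)
    have s: "(\<Sum>\<beta>\<in>W-{\<alpha>}. (-1) *s w \<beta>) = - sum w (W-{\<alpha>})"
      by (simp add: vec.scale_minus_left sum_negf)
    have "c^M *s ee + u = - sum w (W-{\<alpha>})" using h by (simp add: eq_neg_iff_add_eq_0)
    then have "c^M *s ee + u = (\<Sum>\<beta>\<in>W-{\<alpha>}. (-1) *s w \<beta>)" using s by simp
    moreover have "c^M *s ee + u \<noteq> (\<Sum>\<beta>\<in>W-{\<alpha>}. (-1) *s w \<beta>)"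
    proof -
      have kk: "\<forall>d u w. d \<noteq> 0 \<longrightarrow> u \<in> U \<longrightarrow> (\<forall>\<beta>\<in>W-{\<alpha>}. w \<beta> \<in> gw \<beta>) \<longrightarrow> d *s ee + u \<noteq> (\<Sum>\<beta>\<in>W-{\<alpha>}. w \<beta>)"
        using key[of "W-{\<alpha>}"] W_fin by blast
      show ?thesis using kk[rule_format, of "c^M" u "\<lambda>\<beta>. (-1) *s w \<beta>"] cM uw(1) w' by blast
    qed
    ultimately show False by blast
  qed
  then show ?thesis unfolding c_def .
qed
end
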